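(* Let $n\ge 2$, $\sigma\ge 0$, let $z\in\mathbb{C}^n$ satisfy $|z_1|=\cdots=|z_n|=1$, let $W\in\mathbb{C}^{n\times n}$ be $z$-discordant, and let $C=zz^*+\sigma W$. If $x\in\mathbb{C}^n$ satisfies $\|x\|_2^2=n$ and $z^*Cz\le x^*Cx$ (in particular, if $x$ is a global optimizer of $\max x^*Cx$ subject to $|x_1|=\cdots=|x_n|=1$), then \[\min_{\theta\in\mathbb{R}}\|xe^{i\theta}-z\|_2^2=2(n-|z^*x|)\le 144\sigma^2.\]
   Context: For $z\in\mathbb{C}^n$ with unit-modulus entries, a matrix $W\in\mathbb{C}^{n\times n}$ is called $z$-discordant if it is Hermitian and satisfies both $\|W\|_{\mathrm{op}}\le 3\sqrt{n}$ (operator norm = largest singular value) and $\|Wz\|_\infty\le 3\sqrt{n\log n}$, with $\log$ the natural logarithm. *)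

theory Defs
  imports "HOL-Analysis.Analysis"
begin

text \<open>Vectors in C^n are complex ^ 'n, matrices are complex ^ 'n ^ 'n (n = CARD('n)).
The Euclidean norm on complex ^ 'n is the library norm.\<close>

definition hermitian :: "complex ^ 'n ^ 'n \<Rightarrow> bool" where
  "hermitian W \<longleftrightarrow> (\<forall>i j. W $ i $ j = cnj (W $ j $ i))"

definition cinner :: "complex ^ 'n \<Rightarrow> complex ^ 'n \<Rightarrow> complex" where
  "cinner u v = (\<Sum>i\<in>UNIV. cnj (u $ i) * v $ i)"

definition outer :: "complex ^ 'n \<Rightarrow> complex ^ 'n \<Rightarrow> complex ^ 'n ^ 'n" where
  "outer u v = (\<chi> i j. u $ i * cnj (v $ j))"

definition op_norm :: "complex ^ 'n ^ 'n \<Rightarrow> real" where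
  "op_norm W = onorm (\<lambda>v::complex ^ 'n. W *v v)"

definition inf_norm :: "complex ^ 'n \<Rightarrow> real" where
  "inf_norm v = Max (range (\<lambda>i. cmod (v $ i)))"

definition discordant :: "complex ^ 'n \<Rightarrow> complex ^ 'n ^ 'n \<Rightarrow> bool" where
  "discordant z W \<longleftrightarrow> hermitian W
     \<and> op_norm W \<le> 3 * sqrt (real CARD('n))
     \<and> inf_norm (W *v z) \<le> 3 * sqrt (real CARD('n) * ln (real CARD('n)))"

end

theory Submission imports Defs begin

lemma norm_sq_sum: "norm (v::complex^'n) ^ 2 = (\<Sum>i\<in>UNIV. cmod (v$i) ^ 2)"
  by (simp add: norm_vec_def L2_set_def sum_nonneg)

lemma re_cnj_mult: "Re (cnj a * a) = cmod a ^ 2"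
  by (subst mult.commute, subst complex_mult_cnj, simp add: cmod_power2)

lemma cinner_self: "Re (cinner v v) = norm (v::complex^'n) ^ 2"
proof -
  have "Re (cinner v v) = (\<Sum>i\<in>UNIV. Re (cnj (v$i) * v$i))" by (simp add: cinner_def)
  also have "\<dots> = (\<Sum>i\<in>UNIV. cmod (v$i) ^ 2)"
    by (simp only: re_cnj_mult)
  finally show ?thesis by (simp add: norm_sq_sum)
qed

lemma cinner_cnj: "cnj (cinner u v) = cinner v u"
  by (simp add: cinner_def mult.commute)

lemma cinner_add_right: "cinner u (v + w) = cinner u v + cinner u w"
  by (simp add: cinner_def distrib_left sum.distrib)
lemma cinner_add_left: "cinner (u + v) w = cinner u w + cinner v w"
  by (simp add: cinner_def distrib_right sum.distrib)
lemma cinner_diff_right: "cinner u (v - w) = cinner u v - cinner u w"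
  by (simp add: cinner_def right_diff_distrib sum_subtractf)
lemma cinner_diff_left: "cinner (u - v) w = cinner u w - cinner v w"
  by (simp add: cinner_def left_diff_distrib sum_subtractf)
lemma cinner_scale_right: "cinner u (c *s v) = c * cinner u v"
  by (simp add: cinner_def sum_distrib_left algebra_simps)
lemma cinner_scale_left: "cinner (c *s u) v = cnj c * cinner u v"
  by (simp add: cinner_def sum_distrib_left algebra_simps)

lemma norm_add_sq: "norm (u + v::complex^'n) ^ 2 = norm u ^ 2 + norm v ^ 2 + 2 * Re (cinner u v)"
proof -
  have "Re (cinner v u) = Re (cinner u v)" by (metis cinner_cnj complex_cnj_cnj cnj.sel(1))
  thus ?thesis
    by (simp flip: cinner_self add: cinner_add_right cinner_add_left)
qed

lemma norm_diff_sq: "norm (u - v::complex^'n) ^ 2 = norm u ^ 2 + norm v ^ 2 - 2 * Re (cinner u v)"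
proof -
  have "Re (cinner v u) = Re (cinner u v)" by (metis cinner_cnj complex_cnj_cnj cnj.sel(1))
  thus ?thesis
    by (simp flip: cinner_self add: cinner_diff_right cinner_diff_left)
qed

lemma norm_scale: "norm (c *s (v::complex^'n)) = cmod c * norm v"
proof -
  have "norm (c *s v) ^ 2 = (cmod c * norm v) ^ 2"
    by (simp add: norm_sq_sum power_mult_distrib norm_mult sum_distrib_left)
  thus ?thesis by (simp add: power2_eq_iff_nonneg)
qed

lemma cs: "cmod (cinner u v) \<le> norm u * norm (v::complex^'n)"
proof -
  have "cmod (cinner u v) \<le> (\<Sum>i\<in>UNIV. cmod (cnj (u$i) * v$i))"
    unfolding cinner_def by (rule norm_sum)
  also have "\<dots> = (\<Sum>i\<in>UNIV. \<bar>cmod (u$i)\<bar> * \<bar>cmod (v$i)\<bar>)" by (simp add: norm_mult)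
  also have "\<dots> \<le> L2_set (\<lambda>i. cmod (u$i)) UNIV * L2_set (\<lambda>i. cmod (v$i)) UNIV"
    by (rule L2_set_mult_ineq)
  finally show ?thesis by (simp add: norm_vec_def)
qed

lemma herm: assumes "hermitian W" shows "cinner u (W *v v) = cinner (W *v u) v"
proof -
  have "cinner u (W *v v) = (\<Sum>i\<in>UNIV. \<Sum>j\<in>UNIV. cnj (u$i) * W$i$j * v$j)"
    by (simp add: cinner_def matrix_vector_mult_def sum_distrib_left mult.assoc)
  also have "\<dots> = (\<Sum>j\<in>UNIV. \<Sum>i\<in>UNIV. cnj (u$i) * W$i$j * v$j)"
    by (rule sum.swap)
  also have "\<dots> = cinner (W *v u) v"
    unfolding cinner_def matrix_vector_mult_def vec_lambda_beta cnj_sum sum_distrib_right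
    apply (rule sum.cong[OF refl], rule sum.cong[OF refl])
    subgoal for j i
      using assms[unfolded hermitian_def, rule_format, of i j] by simp
    done
  finally show ?thesis .
qed

lemma opn: "norm (W *v v) \<le> op_norm W * norm (v::complex^'n)"
  unfolding op_norm_def
  by (rule onorm) (simp add: linear_conv_bounded_linear)

lemma outer_mv: "outer u u *v v = cinner u v *s u"
  unfolding outer_def matrix_vector_mult_def cinner_def
  by (simp add: vec_eq_iff sum_distrib_left algebra_simps)


lemma cinner_self_of_real: "cinner v v = complex_of_real (norm (v::complex^'n) ^ 2)"
proof -
  have "cinner v v = (\<Sum>i\<in>UNIV. complex_of_real (cmod (v$i) ^ 2))"
    unfolding cinner_def by (rule sum.cong[OF refl]) (metis complex_norm_square mult.commute)
  thus ?thesis by (simp add: norm_sq_sum)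
qed

lemma scaleR_comp: "(r *\<^sub>R (v::complex^'n)) $ i = of_real r * v $ i"
  by (subst vector_scaleR_component) (simp add: scaleR_conv_of_real)

lemma cinner_scaleR_right: "cinner u (r *\<^sub>R v) = of_real r * cinner u v"
  unfolding cinner_def scaleR_comp by (simp add: sum_distrib_left algebra_simps)

lemma scaleR_mv: "(r *\<^sub>R W) *v (v::complex^'n) = r *\<^sub>R (W *v v)"
  by (simp add: vec_eq_iff matrix_vector_mult_def scaleR_sum_right)

lemma quad_form: "cinner v ((outer z z + \<sigma> *\<^sub>R W) *v v)
   = cnj (cinner z v) * cinner z v + of_real \<sigma> * cinner v (W *v v)"
  by (simp add: matrix_vector_mult_add_rdistrib outer_mv scaleR_mv cinner_add_right
        cinner_scale_right cinner_scaleR_right cinner_cnj[of z v, symmetric] mult.commute)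


theorem lemma5:
  fixes z x :: "complex ^ 'n" and W :: "complex ^ 'n ^ 'n" and \<sigma> :: real
  assumes "CARD('n) \<ge> 2"
    and "\<sigma> \<ge> 0"
    and "\<forall>i. cmod (z $ i) = 1"
    and "discordant z W"
    and "norm x ^ 2 = real CARD('n)"
    and "Re (cinner z ((outer z z + \<sigma> *\<^sub>R W) *v z))
           \<le> Re (cinner x ((outer z z + \<sigma> *\<^sub>R W) *v x))"
  shows "(INF \<theta>::real. norm (exp (\<i> * of_real \<theta>) *s x - z) ^ 2)
           = 2 * (real CARD('n) - cmod (cinner z x))
         \<and> 2 * (real CARD('n) - cmod (cinner z x)) \<le> 144 * \<sigma> ^ 2"
proof -
  define N where "N = real CARD('n)"
  define c where "c = cinner z x"
  define a where "a = cmod c"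
  have Npos: "N > 0" using assms(1) by (simp add: N_def)
  have hz: "norm z ^ 2 = N" using assms(3) by (simp add: norm_sq_sum N_def)
  have hx: "norm x ^ 2 = N" using assms(5) by (simp add: N_def)
  have nz: "norm z = sqrt N" using hz by (metis norm_ge_zero real_sqrt_unique)
  have nx: "norm x = sqrt N" using hx by (metis norm_ge_zero real_sqrt_unique)
  have a0: "a \<ge> 0" by (simp add: a_def)
  have aN: "a \<le> N"
  proof -
    have "a \<le> norm z * norm x" unfolding a_def c_def by (rule cs)
    also have "\<dots> = N" using nz nx Npos by simp
    finally show ?thesis .
  qed
  have fexp: "norm (exp (\<i> * of_real t) *s x - z) ^ 2 = 2 * N - 2 * Re (exp (\<i> * of_real t) * c)"
    for t :: real
  proof -
    have "norm (exp (\<i> * of_real t) *s x - z) ^ 2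
        = norm (exp (\<i> * of_real t) *s x) ^ 2 + norm z ^ 2 - 2 * Re (cinner (exp (\<i> * of_real t) *s x) z)"
      by (rule norm_diff_sq)
    also have "cinner (exp (\<i> * of_real t) *s x) z = cnj (exp (\<i> * of_real t) * c)"
    proof -
      have "cinner x z = cnj c" by (simp add: c_def cinner_cnj)
      thus ?thesis by (simp add: cinner_scale_left)
    qed
    finally show ?thesis using hx hz by (simp add: norm_scale)
  qed
  have infp: "(INF \<theta>::real. norm (exp (\<i> * of_real \<theta>) *s x - z) ^ 2) = 2 * (N - a)"
    unfolding fexp
  proof (rule cInf_eq_minimum)
    have "exp (\<i> * of_real (- Arg c)) * c = of_real a"
    proof -
      have "exp (\<i> * of_real (- Arg c)) * c = cis (- Arg c) * rcis (cmod c) (Arg c)"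
        by (simp add: cis_conv_exp rcis_cmod_Arg)
      also have "\<dots> = of_real a" by (simp add: rcis_def a_def cis_mult)
      finally show ?thesis .
    qed
    thus "2 * (N - a) \<in> range (\<lambda>t. 2 * N - 2 * Re (exp (\<i> * of_real t) * c))"
      by (intro image_eqI[where x="- Arg c"]) auto
  next
    fix y assume "y \<in> range (\<lambda>t. 2 * N - 2 * Re (exp (\<i> * of_real t) * c))"
    then obtain t where y: "y = 2 * N - 2 * Re (exp (\<i> * of_real t) * c)" by auto
    have "Re (exp (\<i> * of_real t) * c) \<le> cmod (exp (\<i> * of_real t) * c)" by (rule complex_Re_le_cmod)
    also have "\<dots> = a" by (simp add: norm_mult a_def)
    finally show "2 * (N - a) \<le> y" using y by simp
  qed
  define Q where "Q v = Re (cinner v (W *v v))" for v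
  have hyp: "N ^ 2 + \<sigma> * Q z \<le> a ^ 2 + \<sigma> * Q x"
  proof -
    have e1: "Re (cinner z ((outer z z + \<sigma> *\<^sub>R W) *v z)) = N ^ 2 + \<sigma> * Q z"
      using hz by (simp add: quad_form cinner_self_of_real Q_def power2_eq_square)
    have e2: "Re (cinner x ((outer z z + \<sigma> *\<^sub>R W) *v x)) = a ^ 2 + \<sigma> * Q x"
    proof -
      have "cnj c * c = of_real (a ^ 2)" unfolding a_def
        by (metis complex_norm_square mult.commute)
      thus ?thesis by (simp add: quad_form Q_def flip: c_def)
    qed
    show ?thesis using assms(6) e1 e2 by simp
  qed
  define u where "u = (if c = 0 then 1 else cnj c / of_real a)"
  have u1: "cmod u = 1" by (simp add: u_def a_def norm_divide)
  have uu: "cnj u * u = 1"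
    using u1 by (metis complex_norm_square mult.commute of_real_1 power_one)
  define x' where "x' = u *s x"
  have cx': "cinner z x' = of_real a"
  proof (cases "c = 0")
    case True thus ?thesis by (simp add: x'_def cinner_scale_right u_def a_def flip: c_def)
  next
    case False
    hence "a \<noteq> 0" by (simp add: a_def)
    have "cinner z x' = cnj c * c / of_real a"
      using False by (simp add: x'_def cinner_scale_right u_def flip: c_def)
    also have "cnj c * c = of_real a * of_real a" unfolding a_def
      by (metis complex_norm_square mult.commute of_real_mult power2_eq_square)
    finally show ?thesis using \<open>a \<noteq> 0\<close> by simp
  qed
  have nx': "norm x' = sqrt N" using u1 nx by (simp add: x'_def norm_scale)
  have Qx': "Q x' = Q x"
  proof -
    have "cinner x' (W *v x') = (cnj u * u) * cinner x (W *v x)"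
      by (simp only: x'_def vector_scalar_commute cinner_scale_left cinner_scale_right mult.assoc mult.left_commute)
    thus ?thesis unfolding Q_def uu by simp
  qed
  have herm_W: "hermitian W" and opW: "op_norm W \<le> 3 * sqrt N"
    using assms(4) by (auto simp: discordant_def N_def)
  have diffQ: "Q x' - Q z = Re (cinner (x' - z) (W *v (x' + z)))"
  proof -
    have "Re (cinner x' (W *v z)) = Re (cinner z (W *v x'))"
      by (metis herm[OF herm_W] cinner_cnj cnj.sel(1))
    thus ?thesis
      by (simp add: Q_def matrix_vector_right_distrib cinner_add_right cinner_diff_left)
  qed
  define d where "d = N ^ 2 - a ^ 2"
  have d0: "d \<ge> 0" using a0 aN by (simp add: d_def power_mono)
  have cx'2: "Re (cinner x' z) = a"
    by (metis cinner_cnj cx' cnj.sel(1) Re_complex_of_real)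
  have nm: "norm (x' - z) ^ 2 = 2 * N - 2 * a" and np: "norm (x' + z) ^ 2 = 2 * N + 2 * a"
    using nx' hz Npos by (simp_all add: norm_diff_sq norm_add_sq cx'2)
  have prod: "norm (x' - z) * norm (x' + z) = 2 * sqrt d"
  proof -
    have "(norm (x' - z) * norm (x' + z)) ^ 2 = norm (x' - z) ^ 2 * norm (x' + z) ^ 2"
      by (simp add: power_mult_distrib)
    also have "\<dots> = (2 * N - 2 * a) * (2 * N + 2 * a)" by (simp only: nm np)
    also have "\<dots> = 4 * d" by (simp add: d_def algebra_simps power2_eq_square)
    also have "\<dots> = (2 * sqrt d) ^ 2" using d0 by (simp add: power_mult_distrib)
    finally have "(norm (x' - z) * norm (x' + z)) ^ 2 = (2 * sqrt d) ^ 2" .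
    thus ?thesis by (rule power2_eq_imp_eq) (use d0 in auto)
  qed
  have bnd: "Q x' - Q z \<le> 6 * sqrt N * sqrt d"
  proof -
    have "Q x' - Q z \<le> cmod (cinner (x' - z) (W *v (x' + z)))"
      unfolding diffQ by (rule complex_Re_le_cmod)
    also have "\<dots> \<le> norm (x' - z) * norm (W *v (x' + z))" by (rule cs)
    also have "\<dots> \<le> norm (x' - z) * (op_norm W * norm (x' + z))"
      by (rule mult_left_mono[OF opn norm_ge_zero])
    also have "\<dots> \<le> norm (x' - z) * (3 * sqrt N * norm (x' + z))"
      by (intro mult_left_mono mult_right_mono opW) auto
    also have "\<dots> = 3 * sqrt N * (norm (x' - z) * norm (x' + z))" by simp
    also have "\<dots> = 6 * sqrt N * sqrt d" using prod by simp
    finally show ?thesis .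
  qed
  have dle: "d \<le> \<sigma> * (6 * sqrt N * sqrt d)"
  proof -
    have "d \<le> \<sigma> * (Q x' - Q z)" using hyp Qx' by (simp add: d_def algebra_simps)
    also have "\<dots> \<le> \<sigma> * (6 * sqrt N * sqrt d)" by (rule mult_left_mono[OF bnd assms(2)])
    finally show ?thesis .
  qed
  have sd: "sqrt d \<le> 6 * \<sigma> * sqrt N"
  proof (cases "d = 0")
    case True thus ?thesis using assms(2) Npos by simp
  next
    case False
    hence "sqrt d > 0" using d0 by simp
    have "sqrt d * sqrt d \<le> (6 * \<sigma> * sqrt N) * sqrt d" using dle d0 by (simp add: algebra_simps)
    thus ?thesis using \<open>sqrt d > 0\<close> by (rule mult_right_le_imp_le)
  qed
  have d36: "d \<le> 36 * \<sigma> ^ 2 * N"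
  proof -
    have "d = sqrt d ^ 2" using d0 by simp
    also have "\<dots> \<le> (6 * \<sigma> * sqrt N) ^ 2" by (rule power_mono[OF sd]) (simp add: d0)
    also have "\<dots> = 36 * \<sigma> ^ 2 * N" using Npos by (simp add: power_mult_distrib)
    finally show ?thesis .
  qed
  have "(N - a) * N \<le> (N - a) * (N + a)" using a0 aN by (intro mult_left_mono) auto
  also have "\<dots> = d" by (simp add: d_def power2_eq_square algebra_simps)
  also have "\<dots> \<le> (36 * \<sigma> ^ 2) * N" using d36 by simp
  finally have "N - a \<le> 36 * \<sigma> ^ 2" using Npos by simp
  hence h1: "2 * (N - a) \<le> 72 * \<sigma> ^ 2" by simp
  have h2: "72 * \<sigma> ^ 2 \<le> 144 * \<sigma> ^ 2" by simp
  from h1 h2 have "2 * (N - a) \<le> 144 * \<sigma> ^ 2" by (rule order_trans)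
  thus ?thesis using infp by (simp add: N_def a_def c_def)
qed

end
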